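(* Let $n\ge 3$ and $0\le k\le n-3$, and let $G$ be a connected graph of order $n$ with exactly $k$ pendent vertices. Then $$SO(G)\le \frac{(n-k-2)(n-k-1)^2}{\sqrt2}+k\sqrt{(n-1)^2+1}+(n-k-1)\sqrt{(n-1)^2+(n-k-1)^2},$$ with equality if and only if $G$ is isomorphic to the graph obtained by attaching $k$ pendent edges to one vertex of the complete graph $K_{n-k}$.
   Context: For a graph $G$, $d_G(w)$ denotes the degree of vertex $w$, and the Sombor index is $SO(G)=\sum_{ab\in E(G)}\sqrt{d_G(a)^2+d_G(b)^2}$. A pendent vertex is a vertex of degree one. $K_m$ denotes the complete graph on $m$ vertices. *)

theory Defs
  imports Complex_Main
begin

definition simple_graph :: "'a set \<Rightarrow> 'a set set \<Rightarrow> bool" where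
  "simple_graph V E \<longleftrightarrow> finite V \<and>
     (\<forall>e\<in>E. \<exists>a b. e = {a, b} \<and> a \<noteq> b \<and> a \<in> V \<and> b \<in> V)"

definition degree :: "'a set set \<Rightarrow> 'a \<Rightarrow> nat" where
  "degree E v = card {e \<in> E. v \<in> e}"

definition connected_graph :: "'a set \<Rightarrow> 'a set set \<Rightarrow> bool" where
  "connected_graph V E \<longleftrightarrow>
     (\<forall>u\<in>V. \<forall>v\<in>V. (\<lambda>x y. {x, y} \<in> E)\<^sup>*\<^sup>* u v)"

definition pendent_vertices :: "'a set \<Rightarrow> 'a set set \<Rightarrow> 'a set" where
  "pendent_vertices V E = {v \<in> V. degree E v = 1}"

definition sombor :: "'a set set \<Rightarrow> real" where
  "sombor E = (\<Sum>e\<in>E. sqrt (\<Sum>v\<in>e. (real (degree E v))^2))"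

definition graph_iso :: "'a set \<Rightarrow> 'a set set \<Rightarrow> 'b set \<Rightarrow> 'b set set \<Rightarrow> bool" where
  "graph_iso V E V' E' \<longleftrightarrow> (\<exists>f. bij_betw f V V' \<and>
     (\<forall>a\<in>V. \<forall>b\<in>V. {a, b} \<in> E \<longleftrightarrow> {f a, f b} \<in> E'))"

text \<open>K_{n-k} on vertices 0..n-k-1 with k pendent edges attached at vertex 0
  (pendent vertices n-k..n-1).\<close>
definition kite_vertices :: "nat \<Rightarrow> nat set" where
  "kite_vertices n = {0..<n}"

definition kite_edges :: "nat \<Rightarrow> nat \<Rightarrow> nat set set" where
  "kite_edges n k = {{a, b} | a b. a < n - k \<and> b < n - k \<and> a \<noteq> b}
                   \<union> {{0, b} | b. n - k \<le> b \<and> b < n}"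

end

theory Submission
  imports Defs
begin


lemma sqrt_scale: "(a::real) \<ge> 0 \<Longrightarrow> sqrt ((a*x)^2 + (a*y)^2) = a * sqrt (x^2+y^2)"
proof -
  assume a: "a \<ge> 0"
  have "(a*x)^2 + (a*y)^2 = a^2 * (x^2+y^2)" by (simp add: power_mult_distrib algebra_simps)
  thus ?thesis using a by (simp add: real_sqrt_mult)
qed

lemma submod:
  fixes A B C :: real
  assumes "0 \<le> C" "C \<le> A" "C \<le> B"
  shows "sqrt (A^2+B^2) + sqrt 2 * C \<le> sqrt (A^2+C^2) + sqrt (B^2+C^2)"
proof -
  have A0: "A \<ge> 0" "B \<ge> 0" using assms by auto
  have key: "(2*C^2)*(A^2+B^2) \<le> (A^2+C^2)*(B^2+C^2)"
  proof -
    have "A^2 \<ge> C^2" "B^2 \<ge> C^2" using assms by (auto intro: power_mono)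
    hence "(A^2-C^2)*(B^2-C^2) \<ge> 0" by simp
    thus ?thesis by (simp add: algebra_simps)
  qed
  have s1: "sqrt 2 * C * sqrt (A^2+B^2) \<le> sqrt (A^2+C^2) * sqrt (B^2+C^2)"
  proof -
    have "sqrt 2 * C * sqrt (A^2+B^2) = sqrt ((2*C^2)*(A^2+B^2))"
      using assms by (simp add: real_sqrt_mult)
    also have "\<dots> \<le> sqrt ((A^2+C^2)*(B^2+C^2))" using key by simp
    also have "\<dots> = sqrt (A^2+C^2) * sqrt (B^2+C^2)" by (simp add: real_sqrt_mult)
    finally show ?thesis .
  qed
  have "(sqrt (A^2+B^2) + sqrt 2 * C)^2 = A^2+B^2 + 2*C^2 + 2*(sqrt 2 * C * sqrt (A^2+B^2))"
    using assms by (simp add: power2_eq_square algebra_simps)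
  also have "\<dots> \<le> A^2+B^2+2*C^2 + 2*(sqrt (A^2+C^2) * sqrt (B^2+C^2))" using s1 by simp
  also have "\<dots> = (sqrt (A^2+C^2) + sqrt (B^2+C^2))^2"
    by (simp add: power2_eq_square algebra_simps)
  finally have "(sqrt (A^2+B^2) + sqrt 2 * C)^2 \<le> (sqrt (A^2+C^2) + sqrt (B^2+C^2))^2" .
  thus ?thesis
    by (rule power2_le_imp_le) simp
qed

lemma chord:
  fixes c s K :: real
  assumes "0 \<le> c" "0 \<le> s" "s \<le> K" "0 < K"
  shows "sqrt ((c+s)^2+c^2) - sqrt 2 * c \<le> s/K * (sqrt ((c+K)^2+c^2) - sqrt 2 * c)"
proof -
  define t where "t = s/K"
  have t: "0 \<le> t" "t \<le> 1" using assms by (auto simp: t_def)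
  have e1: "c + s = (1-t)*c + t*(c+K)" "c = (1-t)*c + t*c" using assms by (auto simp: t_def field_simps)
  have "sqrt ((c+s)^2+c^2) = sqrt (((1-t)*c + t*(c+K))^2 + ((1-t)*c + t*c)^2)"
    using e1 by metis
  also have "\<dots> \<le> sqrt (((1-t)*c)^2 + ((1-t)*c)^2) + sqrt ((t*(c+K))^2 + (t*c)^2)"
    by (rule real_sqrt_sum_squares_triangle_ineq)
  also have "\<dots> = (1-t) * sqrt (c^2+c^2) + t * sqrt ((c+K)^2+c^2)"
    using t sqrt_scale[of "1-t" c c] sqrt_scale[of t "c+K" c] by simp
  also have "sqrt (c^2+c^2) = sqrt 2 * c" using assms by (simp add: real_sqrt_mult)
  finally show ?thesis by (simp add: t_def algebra_simps)
qed



definition pairs :: "'a set \<Rightarrow> 'a set set" where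
  "pairs A = {B. B \<subseteq> A \<and> card B = 2}"

lemma pairs_alt: "pairs A = {{a,b}|a b. a\<in>A \<and> b\<in>A \<and> a\<noteq>b}"
  unfolding pairs_def by (auto simp: card_2_iff)

lemma card_pairs: "finite A \<Longrightarrow> card (pairs A) = card A choose 2"
  unfolding pairs_def by (rule n_subsets)

locale sg =
  fixes V :: "'a set" and E :: "'a set set"
  assumes simple: "simple_graph V E"
begin

abbreviation "d \<equiv> degree E"
abbreviation "P \<equiv> pendent_vertices V E"
abbreviation "Q \<equiv> V - P"
definition "EQ = {e\<in>E. e \<subseteq> Q}"
definition "EP = E - EQ"
definition "tm e = sqrt (\<Sum>v\<in>e. (real (d v))^2)"

lemma finV: "finite V" using simple by (simp add: simple_graph_def)

lemma edgeE: assumes "e \<in> E" obtains a b where "e = {a,b}" "a \<noteq> b" "a \<in> V" "b \<in> V"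
  using simple assms unfolding simple_graph_def by blast

lemma EsubPow: "E \<subseteq> Pow V" by (auto elim: edgeE)

lemma finE: "finite E" by (rule finite_subset[OF EsubPow]) (simp add: finV)

lemma fin_inc: "finite {e\<in>E. v \<in> e}" using finE by simp

lemma term_pair: "a \<noteq> b \<Longrightarrow> tm {a,b} = sqrt ((real (d a))^2 + (real (d b))^2)"
  by (simp add: tm_def)

lemma sombor_eq: "sombor E = (\<Sum>e\<in>E. tm e)" by (simp add: sombor_def tm_def)

lemma deg_le: assumes "v \<in> V" shows "d v \<le> card V - 1"
proof -
  have "{e\<in>E. v \<in> e} \<subseteq> (\<lambda>w. {v,w}) ` (V - {v})"
  proof
    fix e assume "e \<in> {e\<in>E. v \<in> e}"
    then obtain a b where "e = {a,b}" "a \<noteq> b" "a \<in> V" "b \<in> V" "v \<in> e" by (auto elim: edgeE)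
    thus "e \<in> (\<lambda>w. {v,w}) ` (V - {v})" by auto
  qed
  hence "d v \<le> card ((\<lambda>w. {v,w}) ` (V - {v}))" unfolding degree_def
    by (intro card_mono) (use finV in auto)
  also have "\<dots> \<le> card (V - {v})" by (rule card_image_le) (use finV in auto)
  also have "\<dots> = card V - 1" using assms finV by simp
  finally show ?thesis .
qed

lemma inc_split: "d v = card {e\<in>EQ. v \<in> e} + card {e\<in>EP. v \<in> e}"
proof -
  have "{e\<in>E. v \<in> e} = {e\<in>EQ. v \<in> e} \<union> {e\<in>EP. v \<in> e}" by (auto simp: EQ_def EP_def)
  moreover have "{e\<in>EQ. v \<in> e} \<inter> {e\<in>EP. v \<in> e} = {}" by (auto simp: EP_def)
  moreover have "finite {e\<in>EQ. v \<in> e}" "finite {e\<in>EP. v \<in> e}"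
    using finE by (auto simp: EQ_def EP_def)
  ultimately show ?thesis unfolding degree_def by (simp add: card_Un_disjoint)
qed

lemma q_le: assumes "v \<in> Q" shows "card {e\<in>EQ. v \<in> e} \<le> card Q - 1"
proof -
  have "{e\<in>EQ. v \<in> e} \<subseteq> (\<lambda>w. {v,w}) ` (Q - {v})"
  proof
    fix e assume "e \<in> {e\<in>EQ. v \<in> e}"
    then obtain a b where "e = {a,b}" "a \<noteq> b" "e \<subseteq> Q" "v \<in> e" by (auto simp: EQ_def elim: edgeE)
    thus "e \<in> (\<lambda>w. {v,w}) ` (Q - {v})" by auto
  qed
  hence "card {e\<in>EQ. v \<in> e} \<le> card ((\<lambda>w. {v,w}) ` (Q - {v}))"
    by (intro card_mono) (use finV in auto)
  also have "\<dots> \<le> card (Q - {v})" by (rule card_image_le) (use finV in auto)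
  also have "\<dots> = card Q - 1" using assms finV by simp
  finally show ?thesis .
qed

lemma pend_unique: assumes "x \<in> P" "e1 \<in> E" "x \<in> e1" "e2 \<in> E" "x \<in> e2" shows "e1 = e2"
proof -
  have "card {e\<in>E. x \<in> e} = 1" using assms(1) by (simp add: pendent_vertices_def degree_def)
  then obtain e where eq: "{e\<in>E. x \<in> e} = {e}" by (rule card_1_singletonE)
  have "e1 \<in> {e\<in>E. x \<in> e}" "e2 \<in> {e\<in>E. x \<in> e}" using assms by auto
  hence "e1 = e" "e2 = e" unfolding eq by auto
  thus ?thesis by simp
qed

lemma EP_has_P: assumes "e \<in> EP" shows "\<exists>x\<in>e. x \<in> P"
  using assms EsubPow by (auto simp: EP_def EQ_def)

lemma card_EP: "card EP \<le> card P"
proof -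
  define g where "g e = (SOME x. x \<in> e \<and> x \<in> P)" for e
  have g: "g e \<in> e \<and> g e \<in> P" if "e \<in> EP" for e
    unfolding g_def using EP_has_P[OF that] by (metis (mono_tags, lifting) someI_ex)
  have "inj_on g EP"
  proof (rule inj_onI)
    fix e1 e2 assume "e1 \<in> EP" "e2 \<in> EP" "g e1 = g e2"
    moreover have "e1 \<in> E" "e2 \<in> E" using \<open>e1 \<in> EP\<close> \<open>e2 \<in> EP\<close> by (auto simp: EP_def)
    ultimately show "e1 = e2" using g[of e1] g[of e2] pend_unique[of "g e1" e1 e2] by auto
  qed
  moreover have "g ` EP \<subseteq> P" using g by auto
  ultimately show ?thesis
    by (intro card_inj_on_le) (use finV in \<open>simp_all add: pendent_vertices_def\<close>)
qed


definition "pp v = card {e\<in>EP. v \<in> e}"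

lemma EP_sub: "EP \<subseteq> E" by (auto simp: EP_def)
lemma EQ_sub: "EQ \<subseteq> E" by (auto simp: EQ_def)
lemma finEP: "finite EP" using finE EP_sub finite_subset by blast
lemma finEQ: "finite EQ" using finE EQ_sub finite_subset by blast
lemma finQ: "finite Q" using finV by simp
lemma P_sub: "P \<subseteq> V" by (auto simp: pendent_vertices_def)
lemma cardQ: "card Q = card V - card P" using P_sub finV by (simp add: card_Diff_subset finite_subset)

lemma EP_term:
  assumes "e \<in> EP" "card V \<ge> 1"
  shows "tm e \<le> sqrt ((real (card V) - 1)^2 + 1)"
proof -
  have "e \<in> E" using assms EP_sub by auto
  then obtain a b where ab: "e = {a,b}" "a \<noteq> b" "a \<in> V" "b \<in> V" by (rule edgeE)
  obtain x where x: "x \<in> e" "x \<in> P" using EP_has_P[OF assms(1)] by blast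
  have dx: "d x = 1" using x by (simp add: pendent_vertices_def)
  have gen: "sqrt ((real (d x))^2 + (real (d y))^2) \<le> sqrt ((real (card V) - 1)^2 + 1)" if "y \<in> V" for y
  proof -
    have "real (d y) \<le> real (card V) - 1" using deg_le[OF that] assms(2) by linarith
    hence "(real (d y))^2 \<le> (real (card V) - 1)^2" by (intro power_mono) auto
    thus ?thesis using dx by simp
  qed
  show ?thesis
  proof (cases "x = a")
    case True thus ?thesis using gen[OF ab(4)] ab term_pair by simp
  next
    case False hence "x = b" using x ab by auto
    thus ?thesis using gen[OF ab(3)] ab term_pair[of a b] by (simp add: add.commute)
  qed
qed

lemma pQ_sum: "(\<Sum>v\<in>Q. pp v) \<le> card EP"
proof -
  have "(\<Sum>v\<in>Q. pp v) = (\<Sum>v\<in>Q. \<Sum>e\<in>{e. e\<in>EP \<and> v \<in> e}. (1::nat))" by (simp add: pp_def)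
  also have "\<dots> = (\<Sum>e\<in>EP. \<Sum>v\<in>{v. v\<in>Q \<and> v \<in> e}. (1::nat))"
    by (rule sum.swap_restrict[symmetric]) (use finEP finQ in auto)
  also have "\<dots> \<le> (\<Sum>e\<in>EP. (1::nat))"
  proof (rule sum_mono)
    fix e assume e: "e \<in> EP"
    have "e \<in> E" using e EP_sub by auto
    then obtain a b where ab: "e = {a,b}" "a \<noteq> b" by (rule edgeE)
    obtain x where x: "x \<in> e" "x \<in> P" using EP_has_P[OF e] by blast
    have "{v. v\<in>Q \<and> v \<in> e} \<subseteq> e - {x}" using x by auto
    moreover have "card (e - {x}) = 1" using ab x by auto
    ultimately have "card {v. v\<in>Q \<and> v \<in> e} \<le> 1" by (metis (no_types, lifting) ab(1) card_mono finite.emptyI finite.insertI finite_Diff)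
    thus "(\<Sum>v\<in>{v. v\<in>Q \<and> v \<in> e}. (1::nat)) \<le> 1" by simp
  qed
  also have "\<dots> = card EP" by simp
  finally show ?thesis .
qed

end

definition Dfun :: "real \<Rightarrow> real \<Rightarrow> real" where
  "Dfun c s = sqrt ((c+s)^2+c^2) - sqrt 2 * c"

lemma Dfun_nonneg: "0 \<le> c \<Longrightarrow> 0 \<le> s \<Longrightarrow> 0 \<le> Dfun c s"
proof -
  assume "0 \<le> c" "0 \<le> s"
  hence "c^2 \<le> (c+s)^2" by (intro power_mono) auto
  hence "sqrt (c^2+c^2) \<le> sqrt ((c+s)^2+c^2)" by simp
  moreover have "sqrt (c^2+c^2) = sqrt 2 * c" using \<open>0 \<le> c\<close> by (simp add: real_sqrt_mult)
  ultimately show ?thesis unfolding Dfun_def by linarith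
qed

lemma Dfun_0: "0 \<le> c \<Longrightarrow> Dfun c 0 = 0"
  by (simp add: Dfun_def real_sqrt_mult)


context sg begin

lemma EQ_term:
  assumes "e \<in> EQ" "card Q \<ge> 1"
  shows "tm e \<le> sqrt 2 * (real (card Q) - 1) + (\<Sum>v\<in>e. Dfun (real (card Q) - 1) (real (pp v)))"
proof -
  define c where "c = real (card Q) - 1"
  have c0: "c \<ge> 0" using assms(2) by (simp add: c_def)
  have "e \<in> E" using assms EQ_sub by auto
  then obtain a b where ab: "e = {a,b}" "a \<noteq> b" by (rule edgeE)
  have abQ: "a \<in> Q" "b \<in> Q" using assms(1) ab by (auto simp: EQ_def)
  have dle: "real (d v) \<le> c + real (pp v)" if "v \<in> Q" for v
  proof -
    have "d v = card {e\<in>EQ. v \<in> e} + pp v" by (simp add: pp_def inc_split)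
    moreover have "card {e\<in>EQ. v \<in> e} \<le> card Q - 1" using q_le[OF that] .
    ultimately have "d v \<le> card Q - 1 + pp v" by simp
    hence "real (d v) \<le> real (card Q - 1) + real (pp v)" by linarith
    thus ?thesis using assms(2) by (simp add: c_def of_nat_diff)
  qed
  have sq: "(real (d v))^2 \<le> (c + real (pp v))^2" if "v \<in> Q" for v
    using dle[OF that] by (intro power_mono) auto
  have "tm e = sqrt ((real (d a))^2 + (real (d b))^2)" using ab term_pair by simp
  also have "\<dots> \<le> sqrt ((c + real (pp a))^2 + (c + real (pp b))^2)"
    using sq[OF abQ(1)] sq[OF abQ(2)] by simp
  also have "\<dots> \<le> sqrt ((c + real (pp a))^2 + c^2) + sqrt ((c + real (pp b))^2 + c^2) - sqrt 2 * c"
    using submod[of c "c + real (pp a)" "c + real (pp b)"] c0 by simp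
  also have "\<dots> = sqrt 2 * c + (\<Sum>v\<in>e. Dfun c (real (pp v)))"
    using ab by (simp add: Dfun_def)
  finally show ?thesis by (simp add: c_def)
qed

lemma sum_EQ:
  assumes "card Q \<ge> 1"
  shows "(\<Sum>e\<in>EQ. tm e) \<le> real (card EQ) * (sqrt 2 * (real (card Q) - 1))
          + (real (card Q) - 1) * (\<Sum>v\<in>Q. Dfun (real (card Q) - 1) (real (pp v)))"
proof -
  define c where "c = real (card Q) - 1"
  have c0: "c \<ge> 0" using assms by (simp add: c_def)
  define F where "F v = Dfun c (real (pp v))" for v
  have F0: "F v \<ge> 0" for v using Dfun_nonneg[OF c0] by (simp add: F_def)
  have "(\<Sum>e\<in>EQ. tm e) \<le> (\<Sum>e\<in>EQ. sqrt 2 * c + (\<Sum>v\<in>e. F v))"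
    by (rule sum_mono) (use EQ_term assms in \<open>simp add: c_def F_def\<close>)
  also have "\<dots> = real (card EQ) * (sqrt 2 * c) + (\<Sum>e\<in>EQ. \<Sum>v\<in>e. F v)"
    by (simp add: sum.distrib)
  also have "(\<Sum>e\<in>EQ. \<Sum>v\<in>e. F v) = (\<Sum>e\<in>EQ. \<Sum>v\<in>{v. v\<in>Q \<and> v \<in> e}. F v)"
  proof (rule sum.cong)
    fix e assume "e \<in> EQ"
    hence "{v. v\<in>Q \<and> v \<in> e} = e" by (auto simp: EQ_def)
    thus "(\<Sum>v\<in>e. F v) = (\<Sum>v\<in>{v. v\<in>Q \<and> v \<in> e}. F v)" by simp
  qed simp
  also have "\<dots> = (\<Sum>v\<in>Q. \<Sum>e\<in>{e. e\<in>EQ \<and> v \<in> e}. F v)"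
    by (rule sum.swap_restrict) (use finEQ finQ in auto)
  also have "\<dots> = (\<Sum>v\<in>Q. real (card {e\<in>EQ. v \<in> e}) * F v)" by simp
  also have "\<dots> \<le> (\<Sum>v\<in>Q. c * F v)"
  proof (rule sum_mono)
    fix v assume v: "v \<in> Q"
    have "real (card {e\<in>EQ. v \<in> e}) \<le> c"
      using q_le[OF v] assms by (simp add: c_def of_nat_diff)
    thus "real (card {e\<in>EQ. v \<in> e}) * F v \<le> c * F v" using F0 by (intro mult_right_mono) auto
  qed
  also have "\<dots> = c * (\<Sum>v\<in>Q. F v)" by (simp add: sum_distrib_left)
  finally show ?thesis by (simp add: c_def F_def)
qed

lemma D_sum:
  assumes "c \<ge> 0"
  shows "(\<Sum>v\<in>Q. Dfun c (real (pp v))) \<le> Dfun c (real (card P))"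
proof (cases "card P = 0")
  case True
  hence "(\<Sum>v\<in>Q. pp v) = 0" using pQ_sum card_EP by simp
  hence "\<forall>v\<in>Q. pp v = 0" using finQ by simp
  thus ?thesis using True Dfun_0[OF assms] by simp
next
  case False
  define K where "K = real (card P)"
  have K0: "K > 0" using False by (simp add: K_def)
  have sp: "(\<Sum>v\<in>Q. pp v) \<le> card P" using pQ_sum card_EP by simp
  have "(\<Sum>v\<in>Q. Dfun c (real (pp v))) \<le> (\<Sum>v\<in>Q. real (pp v) / K * Dfun c K)"
  proof (rule sum_mono)
    fix v assume v: "v \<in> Q"
    have "pp v \<le> (\<Sum>v\<in>Q. pp v)" by (rule member_le_sum) (use v finQ in auto)
    hence "real (pp v) \<le> K" using sp by (simp add: K_def)
    thus "Dfun c (real (pp v)) \<le> real (pp v) / K * Dfun c K"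
      using chord[of c "real (pp v)" K] assms K0 by (simp add: Dfun_def)
  qed
  also have "\<dots> = (\<Sum>v\<in>Q. real (pp v)) / K * Dfun c K"
    by (simp add: sum_distrib_right sum_divide_distrib)
  also have "\<dots> \<le> 1 * Dfun c K"
  proof (rule mult_right_mono)
    have "(\<Sum>v\<in>Q. real (pp v)) \<le> K" using sp unfolding K_def by (metis of_nat_le_iff of_nat_sum)
    thus "(\<Sum>v\<in>Q. real (pp v)) / K \<le> 1" using K0 by simp
    show "0 \<le> Dfun c K" using Dfun_nonneg assms K0 by simp
  qed
  finally show ?thesis by (simp add: K_def)
qed

end


definition Bnd :: "nat \<Rightarrow> nat \<Rightarrow> real" where
  "Bnd n k = real (n - k - 2) * (real (n - k - 1))^2 / sqrt 2
            + real k * sqrt ((real n - 1)^2 + 1)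
            + real (n - k - 1) * sqrt ((real n - 1)^2 + (real (n - k - 1))^2)"

lemma choose2_real: "real (m choose 2) = real m * (real m - 1) / 2"
proof -
  have "even (m * (m - 1))" by auto
  hence "2 * (m choose 2) = m * (m - 1)" by (simp add: choose_two)
  hence "2 * real (m choose 2) = real m * real (m - 1)" by (metis of_nat_mult of_nat_numeral)
  thus ?thesis by (cases m) auto
qed

lemma div_sqrt2: "(x::real) / sqrt 2 = x * sqrt 2 / 2"
proof -
  have "sqrt 2 * sqrt 2 = (2::real)" by simp
  thus ?thesis by (simp add: field_simps)
qed

lemma Bnd_alt:
  assumes "k + 3 \<le> n"
  shows "Bnd n k = real ((n - k) choose 2) * (sqrt 2 * (real (n - k) - 1))
     + (real (n - k) - 1) * Dfun (real (n - k) - 1) (real k) + real k * sqrt ((real n - 1)^2 + 1)"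
proof -
  define c where "c = real (n - k) - 1"
  define x where "x = real ((n - k) choose 2)"
  have e1: "real (n - k - 2) = c - 1" "real (n - k - 1) = c" "c + real k = real n - 1"
    using assms by (auto simp: c_def of_nat_diff)
  have xc: "x = (c + 1) * c / 2" by (simp add: choose2_real c_def x_def)
  have key: "(c - 1) * c^2 / sqrt 2 = x * (sqrt 2 * c) - c * (sqrt 2 * c)"
    unfolding div_sqrt2 xc by (simp add: field_simps power2_eq_square)
  have "Bnd n k = (c - 1) * c^2 / sqrt 2 + real k * sqrt ((real n - 1)^2 + 1)
          + c * sqrt ((real n - 1)^2 + c^2)"
    unfolding Bnd_def e1 by simp
  also have "\<dots> = x * (sqrt 2 * c) + c * Dfun c (real k) + real k * sqrt ((real n - 1)^2 + 1)"
    unfolding key Dfun_def e1(3) by (simp add: algebra_simps)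
  finally show ?thesis by (simp add: c_def x_def)
qed

context sg begin

lemma main:
  assumes "card P + 3 \<le> card V"
  shows "sombor E \<le> Bnd (card V) (card P)"
    and "sombor E = Bnd (card V) (card P) \<Longrightarrow>
           EQ = pairs Q \<and> (\<forall>e\<in>EP. tm e = sqrt ((real (card V) - 1)^2 + 1))"
proof -
  define n k m where "n = card V" "k = card P" "m = card Q"
  have mnk: "m = n - k" using cardQ by (simp add: n_k_m_def)
  have m3: "m \<ge> 3" using assms mnk by (simp add: n_k_m_def)
  define c where "c = real m - 1"
  define R where "R = sqrt ((real n - 1)^2 + 1)"
  define X where "X = (\<Sum>e\<in>EQ. tm e)"
  define Y where "Y = (\<Sum>e\<in>EP. tm e)"
  have c2: "c \<ge> 2" using m3 by (simp add: c_def)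
  have R0: "R > 0" unfolding R_def by (rule real_sqrt_gt_zero) (smt (verit) zero_le_power2)
  have SO: "sombor E = X + Y"
  proof -
    have EE: "E = EQ \<union> EP" "EQ \<inter> EP = {}" by (auto simp: EP_def EQ_def)
    have "sum tm (EQ \<union> EP) = sum tm EQ + sum tm EP"
      by (rule sum.union_disjoint) (use finEQ finEP EE in auto)
    thus ?thesis unfolding sombor_eq X_def Y_def using EE by metis
  qed
  have Xle: "X \<le> real (card EQ) * (sqrt 2 * c) + c * Dfun c (real k)"
  proof -
    have "X \<le> real (card EQ) * (sqrt 2 * c) + c * (\<Sum>v\<in>Q. Dfun c (real (pp v)))"
      using sum_EQ m3 by (simp add: X_def c_def n_k_m_def)
    also have "\<dots> \<le> real (card EQ) * (sqrt 2 * c) + c * Dfun c (real k)"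
      using D_sum[of c] c2 by (simp add: n_k_m_def)
    finally show ?thesis .
  qed
  have termR: "tm e \<le> R" if "e \<in> EP" for e
    using EP_term[OF that] assms by (simp add: R_def n_k_m_def)
  have Yle: "Y \<le> real (card EP) * R"
    unfolding Y_def using sum_bounded_above[of EP tm R] termR by simp
  have cEQ: "card EQ \<le> m choose 2"
  proof -
    have "EQ \<subseteq> pairs Q" by (auto simp: EQ_def pairs_alt elim!: edgeE)
    hence "card EQ \<le> card (pairs Q)" by (intro card_mono) (auto simp: pairs_def finQ)
    thus ?thesis using card_pairs[OF finQ] by (simp add: n_k_m_def)
  qed
  have cEP: "card EP \<le> k" using card_EP by (simp add: n_k_m_def)
  have kn: "k + 3 \<le> n" using assms by (simp add: n_k_m_def)
  have B: "Bnd n k = real (m choose 2) * (sqrt 2 * c) + c * Dfun c (real k) + real k * R"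
    unfolding c_def mnk R_def by (rule Bnd_alt[OF kn])
  have a1: "real (card EQ) * (sqrt 2 * c) \<le> real (m choose 2) * (sqrt 2 * c)"
    using cEQ c2 by (intro mult_right_mono) auto
  have a2: "real (card EP) * R \<le> real k * R" using cEP R0 by (intro mult_right_mono) auto
  show "sombor E \<le> Bnd (card V) (card P)"
    using SO Xle Yle B a1 a2 unfolding n_k_m_def by linarith
  assume eq: "sombor E = Bnd (card V) (card P)"
  have eqs: "real (card EQ) * (sqrt 2 * c) = real (m choose 2) * (sqrt 2 * c)"
            "real (card EP) * R = real k * R"
    using SO Xle Yle B a1 a2 eq unfolding n_k_m_def by linarith+
  have "card EQ = m choose 2" using eqs(1) c2 by simp
  hence "EQ = pairs Q"
  proof -
    assume ce: "card EQ = m choose 2"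
    have "EQ \<subseteq> pairs Q" by (auto simp: EQ_def pairs_alt elim!: edgeE)
    moreover have "finite (pairs Q)" by (auto simp: pairs_def finQ)
    moreover have "card EQ = card (pairs Q)" using ce card_pairs[OF finQ] by (simp add: n_k_m_def)
    ultimately show ?thesis using card_subset_eq by blast
  qed
  moreover have "\<forall>e\<in>EP. tm e = R"
  proof -
    have "Y \<ge> real k * R" using SO Xle B a1 eq unfolding n_k_m_def by linarith
    hence "real (card EP) * R \<le> Y" using eqs(2) by linarith
    hence "(\<Sum>e\<in>EP. R - tm e) \<le> 0" by (simp add: Y_def sum_subtractf)
    moreover have "\<forall>e\<in>EP. R - tm e \<ge> 0" using termR by simp
    ultimately have "\<forall>e\<in>EP. R - tm e = 0" using sum_nonneg_eq_0_iff[OF finEP] 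
      by (metis (no_types, lifting) order_antisym_conv sum_nonneg)
    thus ?thesis by simp
  qed
  ultimately show "EQ = pairs Q \<and> (\<forall>e\<in>EP. tm e = sqrt ((real (card V) - 1)^2 + 1))"
    by (simp add: R_def n_k_m_def)
qed

end


definition structured :: "'a set \<Rightarrow> 'a set set \<Rightarrow> 'a set \<Rightarrow> 'a set \<Rightarrow> 'a \<Rightarrow> bool" where
  "structured V E Q P u \<longleftrightarrow> Q \<inter> P = {} \<and> V = Q \<union> P \<and> u \<in> Q \<and> E = pairs Q \<union> (\<lambda>x. {u,x}) ` P"

context sg begin

lemma no_loop: "{u} \<notin> E"
proof
  assume "{u} \<in> E"
  then obtain a b where "{u} = {a,b}" "a \<noteq> b" by (rule edgeE)
  thus False by (metis insert_iff singletonD)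
qed

lemma full_adj:
  assumes "u \<in> V" "d u = card V - 1" "w \<in> V" "w \<noteq> u"
  shows "{u,w} \<in> E"
proof -
  define N where "N = {w\<in>V. {u,w} \<in> E}"
  have img: "{e\<in>E. u \<in> e} = (\<lambda>w. {u,w}) ` N"
  proof
    show "{e\<in>E. u \<in> e} \<subseteq> (\<lambda>w. {u,w}) ` N"
    proof
      fix e assume e: "e \<in> {e\<in>E. u \<in> e}"
      then obtain a b where ab: "e = {a,b}" "a \<noteq> b" "a \<in> V" "b \<in> V" by (auto elim: edgeE)
      show "e \<in> (\<lambda>w. {u,w}) ` N"
      proof (cases "u = a")
        case True thus ?thesis using ab e by (auto simp: N_def)
      next
        case False hence "u = b" using e ab by auto
        hence "e = {u,a}" using ab by auto
        thus ?thesis using ab e by (auto simp: N_def)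
      qed
    qed
  qed (auto simp: N_def)
  have uN: "u \<notin> N" using no_loop[of u] by (auto simp: N_def)
  have "inj_on (\<lambda>w. {u,w}) N"
    by (rule inj_onI) (use uN in \<open>auto simp: doubleton_eq_iff\<close>)
  hence "card N = d u" unfolding degree_def img by (simp add: card_image)
  hence cN: "card N = card (V - {u})" using assms finV by simp
  have "N \<subseteq> V - {u}" using uN by (auto simp: N_def)
  hence "N = V - {u}" using cN finV by (metis card_subset_eq finite_Diff)
  thus ?thesis using assms by (auto simp: N_def)
qed

lemma struct_of_eq:
  assumes "card P + 3 \<le> card V" "sombor E = Bnd (card V) (card P)"
  shows "\<exists>u. structured V E Q P u"
proof -
  define n where "n = card V"
  have n3: "n \<ge> 3" using assms by (simp add: n_def)
  have M: "EQ = pairs Q" "\<forall>e\<in>EP. tm e = sqrt ((real n - 1)^2 + 1)"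
    using main(2)[OF assms(1,2)] by (auto simp: n_def)
  have QP: "Q \<inter> P = {}" "V = Q \<union> P" using P_sub by auto
  have EE: "E = EQ \<union> EP" using EQ_sub by (auto simp: EP_def)
  have nbr: "\<exists>u. {x,u} \<in> E \<and> d u = n - 1" if x: "x \<in> P" for x
  proof -
    have "card {e\<in>E. x \<in> e} = 1" using x by (simp add: pendent_vertices_def degree_def)
    then obtain e where "{e\<in>E. x \<in> e} = {e}" by (rule card_1_singletonE)
    hence e: "e \<in> E" "x \<in> e" by auto
    hence eP: "e \<in> EP" using x by (auto simp: EP_def EQ_def)
    obtain a b where ab: "e = {a,b}" "a \<noteq> b" using e(1) by (rule edgeE)
    obtain u where u: "e = {x,u}" "x \<noteq> u" using ab e(2) by auto
    have dx: "d x = 1" using x by (simp add: pendent_vertices_def)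
    have "sqrt ((real (d x))^2 + (real (d u))^2) = sqrt ((real n - 1)^2 + 1)"
      using M(2) eP u term_pair by auto
    hence "(real (d u))^2 = (real n - 1)^2" using dx by simp
    hence "real (d u) = real n - 1" using n3
      by (metis abs_of_nonneg of_nat_0_le_iff power2_eq_iff_nonneg diff_ge_0_iff_ge of_nat_1 of_nat_le_iff le_trans one_le_numeral)
    hence "d u = n - 1" using n3 by linarith
    thus ?thesis using u e by auto
  qed
  show ?thesis
  proof (cases "P = {}")
    case True
    have "card Q \<ge> 3" using assms cardQ by simp
    hence "Q \<noteq> {}" by (metis card.empty not_numeral_le_zero)
    then obtain u where u: "u \<in> Q" by blast
    have "EP = {}" using EP_has_P True by blast
    hence "E = pairs Q \<union> (\<lambda>x. {u,x}) ` P" using EE M(1) True by simp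
    thus ?thesis using QP u by (auto simp: structured_def)
  next
    case False
    then obtain x0 where x0: "x0 \<in> P" by blast
    obtain u where u: "{x0,u} \<in> E" "d u = n - 1" using nbr[OF x0] by blast
    have uV: "u \<in> V" using u(1) EsubPow by auto
    have "u \<notin> P" using u(2) n3 by (auto simp: pendent_vertices_def)
    hence uQ: "u \<in> Q" using uV by simp
    have adj: "{u,x} \<in> E" if "x \<in> P" for x
      using full_adj[OF uV u(2)[unfolded n_def]] that P_sub \<open>u \<notin> P\<close> by auto
    have "EP = (\<lambda>x. {u,x}) ` P"
    proof
      show "EP \<subseteq> (\<lambda>x. {u,x}) ` P"
      proof
        fix e assume e: "e \<in> EP"
        then obtain x where x: "x \<in> e" "x \<in> P" using EP_has_P by blast
        have "e = {u,x}" using pend_unique[OF x(2), of e "{u,x}"] e x adj[OF x(2)] EP_sub by auto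
        thus "e \<in> (\<lambda>x. {u,x}) ` P" using x by auto
      qed
      show "(\<lambda>x. {u,x}) ` P \<subseteq> EP"
        using adj by (auto simp: EP_def EQ_def)
    qed
    hence "E = pairs Q \<union> (\<lambda>x. {u,x}) ` P" using EE M(1) by simp
    thus ?thesis using QP uQ by (auto simp: structured_def)
  qed
qed

end


lemma iso_sombor:
  assumes G: "simple_graph V E" and G': "simple_graph V' E'" and iso: "graph_iso V E V' E'"
  shows "sombor E = sombor E'"
proof -
  interpret g: sg V E by (unfold_locales) (rule G)
  interpret g': sg V' E' by (unfold_locales) (rule G')
  obtain f where f: "bij_betw f V V'" and adj: "\<forall>a\<in>V. \<forall>b\<in>V. {a,b} \<in> E \<longleftrightarrow> {f a, f b} \<in> E'"
    using iso unfolding graph_iso_def by blast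
  have injf: "inj_on f V" and fV: "f ` V = V'" using f by (auto simp: bij_betw_def)
  define \<phi> where "\<phi> e = f ` e" for e
  have EV: "e \<subseteq> V" if "e \<in> E" for e using g.EsubPow that by auto
  have inj\<phi>: "inj_on \<phi> E"
  proof (rule inj_onI)
    fix e1 e2 assume "e1 \<in> E" "e2 \<in> E" "\<phi> e1 = \<phi> e2"
    thus "e1 = e2" using EV injf unfolding \<phi>_def by (metis inj_on_image_eq_iff)
  qed
  have img: "\<phi> ` E = E'"
  proof
    show "\<phi> ` E \<subseteq> E'"
    proof
      fix e' assume "e' \<in> \<phi> ` E"
      then obtain e where e: "e \<in> E" "e' = f ` e" by (auto simp: \<phi>_def)
      obtain a b where ab: "e = {a,b}" "a \<in> V" "b \<in> V" using e(1) by (rule g.edgeE)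
      thus "e' \<in> E'" using adj e by auto
    qed
    show "E' \<subseteq> \<phi> ` E"
    proof
      fix e' assume e': "e' \<in> E'"
      obtain a' b' where ab: "e' = {a',b'}" "a' \<in> V'" "b' \<in> V'" using e' by (rule g'.edgeE)
      obtain a b where "a \<in> V" "b \<in> V" "f a = a'" "f b = b'" using ab fV by blast
      moreover have "{a,b} \<in> E" using adj calculation e' ab by auto
      ultimately show "e' \<in> \<phi> ` E" using ab unfolding \<phi>_def by (auto intro!: image_eqI[where x="{a,b}"])
    qed
  qed
  have deg: "degree E' (f v) = degree E v" if v: "v \<in> V" for v
  proof -
    have "{e'\<in>E'. f v \<in> e'} = \<phi> ` {e\<in>E. v \<in> e}"
    proof
      show "{e'\<in>E'. f v \<in> e'} \<subseteq> \<phi> ` {e\<in>E. v \<in> e}"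
      proof
        fix e' assume "e' \<in> {e'\<in>E'. f v \<in> e'}"
        then obtain e where e: "e \<in> E" "e' = f ` e" "f v \<in> f ` e" using img by (auto simp: \<phi>_def)
        hence "v \<in> e" using EV[OF e(1)] injf v by (metis inj_on_image_mem_iff)
        thus "e' \<in> \<phi> ` {e\<in>E. v \<in> e}" using e by (auto simp: \<phi>_def)
      qed
    qed (use img in \<open>auto simp: \<phi>_def\<close>)
    moreover have "inj_on \<phi> {e\<in>E. v \<in> e}" using inj\<phi> by (rule inj_on_subset) auto
    ultimately show ?thesis unfolding degree_def by (simp add: card_image)
  qed
  have "sombor E' = (\<Sum>e\<in>\<phi> ` E. sqrt (\<Sum>v'\<in>e. (real (degree E' v'))^2))"
    unfolding sombor_def img ..
  also have "\<dots> = (\<Sum>e\<in>E. sqrt (\<Sum>v'\<in>f ` e. (real (degree E' v'))^2))"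
    using sum.reindex[OF inj\<phi>, of "\<lambda>e. sqrt (\<Sum>v'\<in>e. (real (degree E' v'))^2)"] by (simp add: \<phi>_def)
  also have "\<dots> = (\<Sum>e\<in>E. sqrt (\<Sum>v\<in>e. (real (degree E v))^2))"
  proof (rule sum.cong)
    fix e assume e: "e \<in> E"
    have ie: "inj_on f e" using injf EV[OF e] by (rule inj_on_subset)
    have "(\<Sum>v'\<in>f ` e. (real (degree E' v'))^2) = (\<Sum>v\<in>e. (real (degree E' (f v)))^2)"
      by (simp add: sum.reindex[OF ie])
    also have "\<dots> = (\<Sum>v\<in>e. (real (degree E v))^2)"
      using deg EV[OF e] by (intro sum.cong) auto
    finally show "sqrt (\<Sum>v'\<in>f ` e. (real (degree E' v'))^2) = sqrt (\<Sum>v\<in>e. (real (degree E v))^2)" by simp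
  qed simp
  finally show ?thesis by (simp add: sombor_def)
qed


context sg begin
lemma deg_nbrs: "d v = card {w\<in>V. {v,w} \<in> E}"
proof -
  define N where "N = {w\<in>V. {v,w} \<in> E}"
  have img: "{e\<in>E. v \<in> e} = (\<lambda>w. {v,w}) ` N"
  proof
    show "{e\<in>E. v \<in> e} \<subseteq> (\<lambda>w. {v,w}) ` N"
    proof
      fix e assume e: "e \<in> {e\<in>E. v \<in> e}"
      then obtain a b where ab: "e = {a,b}" "a \<noteq> b" "a \<in> V" "b \<in> V" by (auto elim: edgeE)
      show "e \<in> (\<lambda>w. {v,w}) ` N"
      proof (cases "v = a")
        case True thus ?thesis using ab e by (auto simp: N_def)
      next
        case False hence "v = b" using e ab by auto
        hence "e = {v,a}" using ab by auto
        thus ?thesis using ab e by (auto simp: N_def)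
      qed
    qed
  qed (auto simp: N_def)
  have uN: "v \<notin> N" using no_loop[of v] by (auto simp: N_def)
  have "inj_on (\<lambda>w. {v,w}) N"
    by (rule inj_onI) (use uN in \<open>auto simp: doubleton_eq_iff\<close>)
  thus ?thesis unfolding degree_def img N_def[symmetric] by (simp add: card_image)
qed
end

lemma struct_adj:
  assumes "structured V E Q P u" "a \<in> V" "b \<in> V"
  shows "{a,b} \<in> E \<longleftrightarrow> (a \<in> Q \<and> b \<in> Q \<and> a \<noteq> b) \<or> (a = u \<and> b \<in> P) \<or> (b = u \<and> a \<in> P)"
proof -
  have st: "Q \<inter> P = {}" "V = Q \<union> P" "u \<in> Q" "E = pairs Q \<union> (\<lambda>x. {u,x}) ` P"
    using assms(1) by (auto simp: structured_def)
  have uP: "u \<notin> P" using st by auto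
  have "{a,b} \<in> pairs Q \<longleftrightarrow> (a \<in> Q \<and> b \<in> Q \<and> a \<noteq> b)"
    by (auto simp: pairs_def card_2_iff doubleton_eq_iff)
  moreover have "{a,b} \<in> (\<lambda>x. {u,x}) ` P \<longleftrightarrow> (a = u \<and> b \<in> P) \<or> (b = u \<and> a \<in> P)"
    using uP by (auto simp: doubleton_eq_iff)
  ultimately show ?thesis using st(4) by blast
qed

lemma struct_simple:
  assumes "structured V E Q P u" "finite V"
  shows "simple_graph V E"
  using assms unfolding simple_graph_def structured_def pairs_alt by blast


lemma struct_sombor:
  assumes st: "structured V E Q P u" and fin: "finite V" and m3: "card Q \<ge> 3"
  shows "sombor E = Bnd (card V) (card P)"
proof -
  have G: "simple_graph V E" by (rule struct_simple[OF st fin])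
  interpret g: sg V E by unfold_locales (rule G)
  have s: "Q \<inter> P = {}" "V = Q \<union> P" "u \<in> Q" "E = pairs Q \<union> (\<lambda>x. {u,x}) ` P"
    using st by (auto simp: structured_def)
  have finQ: "finite Q" "finite P" using fin s by auto
  have cV: "card V = card Q + card P" using s finQ by (simp add: card_Un_disjoint)
  define m k n where "m = card Q" "k = card P" "n = card V"
  define c where "c = real m - 1"
  have adj: "\<And>a b. a \<in> V \<Longrightarrow> b \<in> V \<Longrightarrow> {a,b} \<in> E \<longleftrightarrow> (a \<in> Q \<and> b \<in> Q \<and> a \<noteq> b) \<or> (a = u \<and> b \<in> P) \<or> (b = u \<and> a \<in> P)"
    using struct_adj[OF st] by blast
  have du: "g.d u = n - 1"
  proof -
    have "{w\<in>V. {u,w} \<in> E} = V - {u}" using adj s by auto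
    thus ?thesis using g.deg_nbrs[of u] fin s by (simp add: m_k_n_def)
  qed
  have dq: "g.d v = m - 1" if "v \<in> Q" "v \<noteq> u" for v
  proof -
    have "{w\<in>V. {v,w} \<in> E} = Q - {v}" using adj s that by auto
    thus ?thesis using g.deg_nbrs[of v] finQ that by (simp add: m_k_n_def)
  qed
  have dp: "g.d x = 1" if "x \<in> P" for x
  proof -
    have "{x,w} \<in> E \<longleftrightarrow> w = u" if "w \<in> V" for w
      using adj[of x w] s \<open>x \<in> P\<close> that by auto
    hence "{w\<in>V. {x,w} \<in> E} = {u}" using s by auto
    thus ?thesis using g.deg_nbrs[of x] by simp
  qed
  have m1: "real (m - 1) = c" using m3 by (simp add: c_def m_k_n_def of_nat_diff)
  have n1: "real (n - 1) = real n - 1" using m3 cV by (simp add: m_k_n_def of_nat_diff)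
  define E1 E2 E3 where "E1 = pairs (Q - {u})" "E2 = (\<lambda>w. {u,w}) ` (Q - {u})" "E3 = (\<lambda>x. {u,x}) ` P"
  have EU: "E = E1 \<union> E2 \<union> E3"
  proof -
    have "pairs Q = E1 \<union> E2" unfolding E1_E2_E3_def pairs_alt using s(3) by blast
    thus ?thesis using s(4) by (simp add: E1_E2_E3_def)
  qed
  have fin123: "finite E1" "finite E2" "finite E3"
    unfolding E1_E2_E3_def pairs_def using finQ by auto
  have disj: "E1 \<inter> E2 = {}" "(E1 \<union> E2) \<inter> E3 = {}"
    unfolding E1_E2_E3_def pairs_def using s(1) by auto
  have sum1: "(\<Sum>e\<in>E1. g.tm e) = real ((m - 1) choose 2) * (sqrt 2 * c)"
  proof -
    have "(\<Sum>e\<in>E1. g.tm e) = (\<Sum>e\<in>E1. sqrt 2 * c)"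
    proof (rule sum.cong)
      fix e assume "e \<in> E1"
      then obtain a b where ab: "e = {a,b}" "a \<in> Q - {u}" "b \<in> Q - {u}" "a \<noteq> b"
        unfolding E1_E2_E3_def pairs_alt by blast
      have "g.tm e = sqrt (c^2 + c^2)" using ab g.term_pair dq m1 by simp
      also have "\<dots> = sqrt 2 * c" using m3 by (simp add: real_sqrt_mult c_def m_k_n_def)
      finally show "g.tm e = sqrt 2 * c" .
    qed simp
    moreover have "card E1 = (m - 1) choose 2" using card_pairs[of "Q - {u}"] finQ s(3)
      by (simp add: E1_E2_E3_def m_k_n_def)
    ultimately show ?thesis by simp
  qed
  have sum2: "(\<Sum>e\<in>E2. g.tm e) = real (m - 1) * sqrt ((real n - 1)^2 + c^2)"
  proof -
    have inj: "inj_on (\<lambda>w. {u,w}) (Q - {u})" by (rule inj_onI) (auto simp: doubleton_eq_iff)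
    have "(\<Sum>e\<in>E2. g.tm e) = (\<Sum>w\<in>Q - {u}. g.tm {u,w})"
      unfolding E1_E2_E3_def by (simp add: sum.reindex[OF inj])
    also have "\<dots> = (\<Sum>w\<in>Q - {u}. sqrt ((real n - 1)^2 + c^2))"
      by (rule sum.cong) (use g.term_pair du dq m1 n1 in auto)
    also have "\<dots> = real (m - 1) * sqrt ((real n - 1)^2 + c^2)"
      using finQ s(3) by (simp add: m_k_n_def)
    finally show ?thesis .
  qed
  have sum3: "(\<Sum>e\<in>E3. g.tm e) = real k * sqrt ((real n - 1)^2 + 1)"
  proof -
    have inj: "inj_on (\<lambda>w. {u,w}) P" by (rule inj_onI) (auto simp: doubleton_eq_iff)
    have uP: "u \<notin> P" using s by auto
    have "(\<Sum>e\<in>E3. g.tm e) = (\<Sum>w\<in>P. g.tm {u,w})"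
      unfolding E1_E2_E3_def by (simp add: sum.reindex[OF inj])
    also have "\<dots> = (\<Sum>w\<in>P. sqrt ((real n - 1)^2 + 1))"
    proof (rule sum.cong)
      fix x assume x: "x \<in> P"
      hence "u \<noteq> x" using uP by auto
      thus "g.tm {u, x} = sqrt ((real n - 1)^2 + 1)" using g.term_pair[of u x] du dp[OF x] n1 by simp
    qed simp
    also have "\<dots> = real k * sqrt ((real n - 1)^2 + 1)" by (simp add: m_k_n_def)
    finally show ?thesis .
  qed
  have "sombor E = (\<Sum>e\<in>E1. g.tm e) + (\<Sum>e\<in>E2. g.tm e) + (\<Sum>e\<in>E3. g.tm e)"
  proof -
    have "sum g.tm (E1 \<union> E2 \<union> E3) = sum g.tm (E1 \<union> E2) + sum g.tm E3"
      by (rule sum.union_disjoint) (use fin123 disj in auto)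
    moreover have "sum g.tm (E1 \<union> E2) = sum g.tm E1 + sum g.tm E2"
      by (rule sum.union_disjoint) (use fin123 disj in auto)
    ultimately show ?thesis using g.sombor_eq EU by metis
  qed
  also have "\<dots> = Bnd n k"
  proof -
    have e1: "real (n - k - 2) = c - 1" "real (n - k - 1) = c" "real (m - 1) = c"
      using cV m3 by (auto simp: c_def m_k_n_def of_nat_diff)
    have xx: "real ((m - 1) choose 2) = c * (c - 1) / 2"
      using choose2_real[of "m - 1"] e1(3) by simp
    have "real ((m - 1) choose 2) * (sqrt 2 * c) = (c - 1) * c^2 / sqrt 2"
      unfolding div_sqrt2 xx by (simp add: field_simps power2_eq_square)
    thus ?thesis unfolding sum1 sum2 sum3 Bnd_def e1 by simp
  qed
  finally show ?thesis by (simp add: m_k_n_def)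
qed


lemma struct_iso:
  assumes st: "structured V E Q P u" and st': "structured V' E' Q' P' u'"
    and fin: "finite V" "finite V'" and cQ: "card Q = card Q'" and cP: "card P = card P'"
  shows "graph_iso V E V' E'"
proof -
  have s: "Q \<inter> P = {}" "V = Q \<union> P" "u \<in> Q" using st by (auto simp: structured_def)
  have s': "Q' \<inter> P' = {}" "V' = Q' \<union> P'" "u' \<in> Q'" using st' by (auto simp: structured_def)
  have fins: "finite Q" "finite P" "finite Q'" "finite P'" using fin s s' by auto
  obtain g1 where g1: "bij_betw g1 (Q - {u}) (Q' - {u'})"
    using finite_same_card_bij[of "Q - {u}" "Q' - {u'}"] fins s s' cQ by auto
  obtain g2 where g2: "bij_betw g2 P P'"
    using finite_same_card_bij[of P P'] fins cP by auto
  define f where "f v = (if v = u then u' else if v \<in> Q then g1 v else g2 v)" for v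
  have b1: "bij_betw f {u} {u'}" by (simp add: f_def bij_betw_def)
  have b2: "bij_betw f (Q - {u}) (Q' - {u'})"
    using g1 bij_betw_cong[of "Q - {u}" f g1] by (simp add: f_def)
  have b3: "bij_betw f P P'"
  proof -
    have "\<And>a. a \<in> P \<Longrightarrow> f a = g2 a" using s by (auto simp: f_def)
    thus ?thesis using g2 bij_betw_cong[of P f g2] by simp
  qed
  have "bij_betw f ({u} \<union> (Q - {u}) \<union> P) ({u'} \<union> (Q' - {u'}) \<union> P')"
    by (rule bij_betw_combine[OF bij_betw_combine[OF b1 b2]]) (use b3 s' in auto)
  moreover have "{u} \<union> (Q - {u}) \<union> P = V" "{u'} \<union> (Q' - {u'}) \<union> P' = V'" using s s' by auto
  ultimately have bf: "bij_betw f V V'" by simp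
  have fm: "(a = u \<and> f a = u') \<or> (a \<in> Q - {u} \<and> f a \<in> Q' - {u'}) \<or> (a \<in> P \<and> f a \<in> P')"
    if "a \<in> V" for a
  proof -
    have "a = u \<or> a \<in> Q - {u} \<or> a \<in> P" using that s by auto
    moreover have "f u = u'" by (simp add: f_def)
    moreover have "a \<in> Q - {u} \<Longrightarrow> f a \<in> Q' - {u'}" using bij_betwE[OF b2] by blast
    moreover have "a \<in> P \<Longrightarrow> f a \<in> P'" using bij_betwE[OF b3] by blast
    ultimately show ?thesis by blast
  qed
  have fu: "f a = u' \<longleftrightarrow> a = u" if "a \<in> V" for a
    using fm[OF that] s s' by auto
  have fQ: "f a \<in> Q' \<longleftrightarrow> a \<in> Q" if "a \<in> V" for a
    using fm[OF that] s s' by auto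
  have fP: "f a \<in> P' \<longleftrightarrow> a \<in> P" if "a \<in> V" for a
    using fm[OF that] s s' by auto
  have finj: "f a = f b \<longleftrightarrow> a = b" if "a \<in> V" "b \<in> V" for a b
    using bf that by (auto simp: bij_betw_def inj_on_def)
  have fV: "f a \<in> V'" if "a \<in> V" for a using bf that by (auto simp: bij_betw_def)
  show ?thesis unfolding graph_iso_def
  proof (intro exI conjI ballI)
    show "bij_betw f V V'" by (rule bf)
    fix a b assume ab: "a \<in> V" "b \<in> V"
    show "{a, b} \<in> E \<longleftrightarrow> {f a, f b} \<in> E'"
      unfolding struct_adj[OF st ab] struct_adj[OF st' fV[OF ab(1)] fV[OF ab(2)]]
      using fu fQ fP finj ab by metis
  qed
qed

lemma kite_struct:
  assumes "k \<le> n"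
  shows "structured (kite_vertices n) (kite_edges n k) {0..<n-k} {n-k..<n} 0 \<or> n = k"
proof (cases "n = k")
  case False
  hence "0 < n - k" using assms by simp
  moreover have "kite_edges n k = pairs {0..<n-k} \<union> (\<lambda>x. {0,x}) ` {n-k..<n}"
    unfolding kite_edges_def pairs_alt by auto
  ultimately show ?thesis unfolding structured_def kite_vertices_def using assms by auto
qed simp


theorem theorem3p6:
  fixes V :: "'a set" and E :: "'a set set" and n k :: nat
  assumes "simple_graph V E"
    and "connected_graph V E"
    and "card V = n"
    and "n \<ge> 3"
    and "k \<le> n - 3"
    and "card (pendent_vertices V E) = k"
  shows "sombor E \<le> real (n - k - 2) * (real (n - k - 1))^2 / sqrt 2
            + real k * sqrt ((real n - 1)^2 + 1)
            + real (n - k - 1) * sqrt ((real n - 1)^2 + (real (n - k - 1))^2)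
    \<and> (sombor E = real (n - k - 2) * (real (n - k - 1))^2 / sqrt 2
            + real k * sqrt ((real n - 1)^2 + 1)
            + real (n - k - 1) * sqrt ((real n - 1)^2 + (real (n - k - 1))^2)
         \<longleftrightarrow> graph_iso V E (kite_vertices n) (kite_edges n k))"
proof -
  interpret g: sg V E by unfold_locales (rule assms(1))
  have kn: "card (pendent_vertices V E) + 3 \<le> card V" using assms by simp
  have kn': "k + 3 \<le> n" using assms by simp
  have B: "Bnd n k = real (n - k - 2) * (real (n - k - 1))^2 / sqrt 2
            + real k * sqrt ((real n - 1)^2 + 1)
            + real (n - k - 1) * sqrt ((real n - 1)^2 + (real (n - k - 1))^2)"
    by (simp add: Bnd_def)
  have kst: "structured (kite_vertices n) (kite_edges n k) {0..<n-k} {n-k..<n} 0"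
    using kite_struct[of k n] kn' by auto
  have finK: "finite (kite_vertices n)" by (simp add: kite_vertices_def)
  have SK: "sombor (kite_edges n k) = Bnd n k"
    using struct_sombor[OF kst finK] kn' by (simp add: kite_vertices_def)
  have le: "sombor E \<le> Bnd n k" using g.main(1)[OF kn] assms by simp
  have iff: "sombor E = Bnd n k \<longleftrightarrow> graph_iso V E (kite_vertices n) (kite_edges n k)"
  proof
    assume eq: "sombor E = Bnd n k"
    then obtain u where st: "structured V E (V - pendent_vertices V E) (pendent_vertices V E) u"
      using g.struct_of_eq[OF kn] assms by auto
    show "graph_iso V E (kite_vertices n) (kite_edges n k)"
    proof (rule struct_iso[OF st kst g.finV finK])
      show "card (V - pendent_vertices V E) = card {0..<n-k}" using g.cardQ assms by simp
      show "card (pendent_vertices V E) = card {n-k..<n}" using assms by simp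
    qed
  next
    assume iso: "graph_iso V E (kite_vertices n) (kite_edges n k)"
    have "sombor E = sombor (kite_edges n k)"
      by (rule iso_sombor[OF assms(1) struct_simple[OF kst finK] iso])
    thus "sombor E = Bnd n k" using SK by simp
  qed
  show ?thesis using le iff unfolding B by simp
qed

end
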